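(* Fix a mesh and let $D\in\mathbb R^{N\times N}$ be skew-symmetric ($D=-D^T$). Let $U_1,\dots,U_N\ge0$ be fixed and suppose there are indices $i\neq j$ with $U_i=0$, $U_j>0$ and $D_{ij}\neq0$. For $\varepsilon>0$ set $\mathbf u^\varepsilon=(U_k+\varepsilon)_{k=1}^N$. Let $J(\mathbf u)$ be the Jacobian of the flux-differencing residual $\mathcal R_i(\mathbf u)=-2\sum_jD_{ij}F^\star(u_i,u_j)$ with either the logarithmic flux or the geometric flux (coefficient $a\equiv1$), and $J_{\mathrm{sym}}=\tfrac12(J+J^T)$. Then $$\lambda_{\max}\big(J_{\mathrm{sym}}(\mathbf u^\varepsilon)\big)\to\infty\qquad\text{as }\varepsilon\to0^+ .$$
   Context: Logarithmic flux $F^\star(u,v)=(v-u)/(\log v-\log u)$ (value $u$ if $u=v$); geometric flux $F^\star(u,v)=\sqrt{uv}$. The Jacobian is $J_{ik}=-2D_{ik}\partial_2F^\star(u_i,u_k)-2\delta_{ik}\sum_jD_{ij}\partial_1F^\star(u_i,u_j)$. Explicitly, for the logarithmic flux, $(J_{\mathrm{sym}})_{ij}=-D_{ij}\frac{2\log(u_j/u_i)+u_i/u_j-u_j/u_i}{\log^2(u_j/u_i)}$ for $i\ne j$ and $(J_{\mathrm{sym}})_{ii}=-2\sum_{k\ne i}D_{ik}\frac{u_k/u_i-\log(u_k/u_i)-1}{\log^2(u_k/u_i)}$; for the geometric flux, $(J_{\mathrm{sym}})_{ij}=\tfrac12D_{ij}\frac{u_j-u_i}{\sqrt{u_iu_j}}$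 for $i\ne j$ and $(J_{\mathrm{sym}})_{ii}=-\sum_{k\ne i}D_{ik}\sqrt{u_k/u_i}$ (terms with $u_k=u_i$ interpreted by continuity). $\lambda_{\max}$ denotes the largest eigenvalue of a symmetric matrix. *)

theory Defs
  imports Complex_Main "Jordan_Normal_Form.Char_Poly"
begin

definition log_flux :: "real \<Rightarrow> real \<Rightarrow> real" where
  "log_flux u v = (if u = v then u else (v - u) / (ln v - ln u))"

definition geo_flux :: "real \<Rightarrow> real \<Rightarrow> real" where
  "geo_flux u v = sqrt (u * v)"

definition residual :: "(real \<Rightarrow> real \<Rightarrow> real) \<Rightarrow> nat \<Rightarrow> real mat \<Rightarrow> (nat \<Rightarrow> real) \<Rightarrow> nat \<Rightarrow> real" where
  "residual F N D u i = -2 * (\<Sum>j<N. D $$ (i, j) * F (u i) (u j))"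

text \<open>Jacobian entry J_ik(u) = partial derivative of R_i with respect to u_k
  (same as the library deriv, which unfolds to this SOME-term).\<close>
definition jac :: "(real \<Rightarrow> real \<Rightarrow> real) \<Rightarrow> nat \<Rightarrow> real mat \<Rightarrow> (nat \<Rightarrow> real) \<Rightarrow> nat \<Rightarrow> nat \<Rightarrow> real" where
  "jac F N D u i k = (SOME d. ((\<lambda>t. residual F N D (u(k := t)) i) has_real_derivative d) (at (u k)))"

definition jac_sym :: "(real \<Rightarrow> real \<Rightarrow> real) \<Rightarrow> nat \<Rightarrow> real mat \<Rightarrow> (nat \<Rightarrow> real) \<Rightarrow> real mat" where
  "jac_sym F N D u = mat N N (\<lambda>(i, k). (jac F N D u i k + jac F N D u k i) / 2)"

definition lambda_max :: "real mat \<Rightarrow> real" where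
  "lambda_max A = Max {k. eigenvalue A k}"

end

theory Submission
  imports Defs "HOL-Analysis.Analysis" "HOL-Real_Asymp.Real_Asymp"
begin


definition qf :: "real mat \<Rightarrow> nat \<Rightarrow> (nat \<Rightarrow> real) \<Rightarrow> (nat \<Rightarrow> real) \<Rightarrow> real" where
  "qf A N f g = (\<Sum>a<N. \<Sum>b<N. A $$ (a,b) * f a * g b)"
definition nsq :: "nat \<Rightarrow> (nat \<Rightarrow> real) \<Rightarrow> real" where
  "nsq N f = (\<Sum>k<N. (f k)^2)"

lemma nsq_nonneg: "nsq N f \<ge> 0" unfolding nsq_def by (simp add: sum_nonneg)

lemma comp_le_nsq: "k < N \<Longrightarrow> (f k)^2 \<le> nsq N f"
  unfolding nsq_def by (rule member_le_sum) auto

lemma max_on_sphere: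
  assumes "N > 0"
  shows "\<exists>v. nsq N v = 1 \<and> (\<forall>f. nsq N f = 1 \<longrightarrow> qf A N f f \<le> qf A N v v)"
proof -
  define X where "X = product_topology (\<lambda>_::nat. euclideanreal) {..<N}"
  define S where "S = {f \<in> topspace X. nsq N f \<in> {1}}"
  have cq: "continuous_map X euclideanreal (\<lambda>f. qf A N f f)"
    unfolding qf_def X_def
    by (intro continuous_map_sum continuous_map_real_mult continuous_map_const[THEN iffD2]
        continuous_map_product_projection) auto
  have cn: "continuous_map X euclideanreal (nsq N)"
    unfolding nsq_def X_def
    unfolding power2_eq_square by (intro continuous_map_sum continuous_map_real_mult continuous_map_product_projection) auto
  have clS: "closedin X S" unfolding S_def
    by (rule closedin_continuous_map_preimage[OF cn]) auto
  have K: "compactin X (PiE {..<N} (\<lambda>_. {-1..1::real}))"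
    unfolding X_def by (subst compactin_PiE) (auto simp: compactin_euclidean_iff)
  have sub: "S \<subseteq> PiE {..<N} (\<lambda>_. {-1..1::real})"
  proof
    fix f assume "f \<in> S"
    then have f: "f \<in> PiE {..<N} (\<lambda>_. UNIV)" "nsq N f = 1" unfolding S_def X_def by auto
    have "f k \<in> {-1..1}" if "k < N" for k
    proof -
      have "(f k)^2 \<le> 1^2" using comp_le_nsq[OF that, of f] f(2) by simp
      then have "\<bar>f k\<bar> \<le> 1" using abs_le_square_iff[of "f k" 1] by simp
      then show ?thesis by auto
    qed
    then show "f \<in> PiE {..<N} (\<lambda>_. {-1..1::real})" using f(1) by auto
  qed
  have cS: "compactin X S" by (rule closed_compactin[OF K sub clS])
  have "compactin euclideanreal ((\<lambda>f. qf A N f f) ` S)" by (rule image_compactin[OF cS cq])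
  then have cim: "compact ((\<lambda>f. qf A N f f) ` S)" by (simp add: compactin_euclidean_iff)
  define e where "e = restrict (\<lambda>k. if k = 0 then 1 else 0::real) {..<N}"
  have "nsq N e = 1" unfolding nsq_def e_def using assms
    by (simp add: power2_eq_square if_distrib[of "\<lambda>x. x*x"] cong: if_cong)
  then have "e \<in> S" unfolding S_def X_def e_def by auto
  then have ne: "(\<lambda>f. qf A N f f) ` S \<noteq> {}" by auto
  obtain y where y: "y \<in> (\<lambda>f. qf A N f f) ` S" "\<forall>z \<in> (\<lambda>f. qf A N f f) ` S. z \<le> y"
    using compact_attains_sup[OF cim ne] by blast
  then obtain v where v: "v \<in> S" "y = qf A N v v" by auto
  show ?thesis
  proof (intro exI conjI allI impI)
    show "nsq N v = 1" using v unfolding S_def by auto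
    fix f assume f: "nsq N f = 1"
    define g where "g = restrict f {..<N}"
    have "nsq N g = nsq N f" "qf A N g g = qf A N f f" unfolding g_def nsq_def qf_def by auto
    then have "g \<in> S" using f unfolding S_def X_def g_def by auto
    then show "qf A N f f \<le> qf A N v v" using y v \<open>qf A N g g = qf A N f f\<close> by force
  qed
qed

lemma qf_scale: "qf A N (\<lambda>k. t * f k) (\<lambda>k. t * f k) = t^2 * qf A N f f"
  unfolding qf_def power2_eq_square by (simp add: sum_distrib_left algebra_simps)

lemma nsq_scale: "nsq N (\<lambda>k. t * f k) = t^2 * nsq N f"
  unfolding nsq_def by (simp add: sum_distrib_left power_mult_distrib)

lemma qf_expand: "qf A N (\<lambda>k. f k + t * g k) (\<lambda>k. f k + t * g k)
   = qf A N f f + t * (qf A N f g + qf A N g f) + t^2 * qf A N g g"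
  unfolding qf_def power2_eq_square by (simp add: sum_distrib_left sum.distrib algebra_simps)

lemma nsq_expand: "nsq N (\<lambda>k. f k + t * g k) = nsq N f + 2 * t * (\<Sum>k<N. f k * g k) + t^2 * nsq N g"
  unfolding nsq_def power2_eq_square by (simp add: sum_distrib_left sum.distrib algebra_simps)

lemma qf_sym: assumes "\<forall>a<N. \<forall>b<N. A$$(a,b) = A$$(b,a)"
  shows "qf A N f g = qf A N g f"
  unfolding qf_def using assms
  by (subst sum.swap) (auto intro!: sum.cong simp: mult.commute mult.left_commute)

lemma nsq_zero: assumes "nsq N g = 0" "k < N" shows "g k = 0"
proof -
  have "(g k)^2 \<le> 0" using comp_le_nsq[OF assms(2), of g] assms(1) by simp
  then show ?thesis by simp
qed

lemma rayleigh_eig: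
  assumes A: "A \<in> carrier_mat N N" and sym: "\<forall>a<N. \<forall>b<N. A$$(a,b) = A$$(b,a)"
    and x: "nsq N x > 0"
  shows "\<exists>l. eigenvalue A l \<and> qf A N x x \<le> l * nsq N x"
proof -
  have "N > 0" using x unfolding nsq_def by (cases N) auto
  obtain v where v1: "nsq N v = 1" and vmax: "\<forall>f. nsq N f = 1 \<longrightarrow> qf A N f f \<le> qf A N v v"
    using max_on_sphere[OF \<open>N > 0\<close>] by blast
  define M where "M = qf A N v v"
  have claim1: "qf A N g g \<le> M * nsq N g" for g
  proof (cases "nsq N g = 0")
    case True
    then have "qf A N g g = 0" unfolding qf_def using nsq_zero[OF True] by simp
    then show ?thesis using True by simp
  next
    case False
    then have pos: "nsq N g > 0" using nsq_nonneg[of N g] by simp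
    define c where "c = sqrt (nsq N g)"
    have c: "c > 0" "c^2 = nsq N g" using pos unfolding c_def by auto
    define h where "h = (\<lambda>k. (1/c) * g k)"
    have "nsq N h = 1" unfolding h_def nsq_scale using c pos by (simp add: power_divide)
    then have "qf A N h h \<le> M" using vmax unfolding M_def by blast
    moreover have "qf A N h h = qf A N g g / c^2" unfolding h_def qf_scale by (simp add: power_divide)
    ultimately show ?thesis using c pos by (simp add: divide_le_eq mult.commute)
  qed
  define r where "r = (\<lambda>a. (\<Sum>b<N. A$$(a,b) * v b) - M * v a)"
  have qvr: "qf A N v r = nsq N r + M * (\<Sum>k<N. v k * r k)"
  proof -
    have "qf A N v r = (\<Sum>b<N. r b * (\<Sum>a<N. A$$(b,a) * v a))"
      unfolding qf_def using sym
      by (subst sum.swap) (auto intro!: sum.cong simp: sum_distrib_left mult.commute mult.left_commute)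
    also have "\<dots> = (\<Sum>b<N. r b * (r b + M * v b))"
      by (rule sum.cong) (auto simp: r_def)
    also have "\<dots> = nsq N r + M * (\<Sum>k<N. v k * r k)"
      unfolding nsq_def power2_eq_square by (simp add: algebra_simps sum.distrib sum_distrib_left)
    finally show ?thesis .
  qed
  define R where "R = nsq N r"
  define C where "C = qf A N r r - M * nsq N r"
  have ineq: "2 * t * R + t^2 * C \<le> 0" for t
  proof -
    have "qf A N (\<lambda>k. v k + t * r k) (\<lambda>k. v k + t * r k) \<le> M * nsq N (\<lambda>k. v k + t * r k)"
      by (rule claim1)
    then show ?thesis unfolding qf_expand nsq_expand qf_sym[OF sym, of r v] qvr R_def C_def M_def[symmetric] v1
      by (simp add: algebra_simps)
  qed
  have R0: "R = 0"
  proof (rule ccontr)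
    assume "R \<noteq> 0"
    then have Rp: "R > 0" using nsq_nonneg[of N r] unfolding R_def by simp
    define t where "t = R / (\<bar>C\<bar> + 1)"
    have tp: "t > 0" using Rp unfolding t_def by simp
    have "t * \<bar>C\<bar> < R" unfolding t_def using Rp
      by (simp add: field_simps)
    moreover have "- (t * C) \<le> t * \<bar>C\<bar>" using mult_left_mono[OF abs_ge_minus_self[of C], of t] tp by simp
    ultimately have "- (t * C) < R" by linarith
    then have "- (t * (t * C)) < t * R" using tp
      by (metis minus_mult_right mult_strict_left_mono)
    moreover have "t * R > 0" using tp Rp by simp
    ultimately have "2 * t * R + t^2 * C > 0" by (simp add: power2_eq_square algebra_simps)
    then show False using ineq[of t] by simp
  qed
  have rz: "r a = 0" if "a < N" for a using nsq_zero[OF R0[unfolded R_def] that] .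
  define w where "w = Matrix.vec N v"
  have "eigenvector A w M"
    unfolding eigenvector_def
  proof (intro conjI)
    show "w \<in> carrier_vec (dim_row A)" using A unfolding w_def by simp
    show "w \<noteq> 0\<^sub>v (dim_row A)"
    proof
      assume "w = 0\<^sub>v (dim_row A)"
      then have "v k = 0" if "k < N" for k using that A unfolding w_def
        by (metis carrier_matD(1) index_vec index_zero_vec(1))
      then have "nsq N v = 0" unfolding nsq_def by simp
      then show False using v1 by simp
    qed
    show "A *\<^sub>v w = M \<cdot>\<^sub>v w"
    proof (rule eq_vecI)
      fix a assume "a < dim_vec (M \<cdot>\<^sub>v w)"
      then have a: "a < N" unfolding w_def by simp
      have "(A *\<^sub>v w) $ a = (\<Sum>b<N. A$$(a,b) * v b)"
        using A a unfolding w_def by (auto simp: scalar_prod_def lessThan_atLeast0 intro!: sum.cong)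
      also have "\<dots> = M * v a" using rz[OF a] unfolding r_def by simp
      finally show "(A *\<^sub>v w) $ a = (M \<cdot>\<^sub>v w) $ a" using a unfolding w_def by simp
    next
      show "dim_vec (A *\<^sub>v w) = dim_vec (M \<cdot>\<^sub>v w)" using A unfolding w_def by simp
    qed
  qed
  then have "eigenvalue A M" unfolding eigenvalue_def by blast
  then show ?thesis using claim1[of x] by blast
qed

lemma lambda_max_ge:
  assumes A: "A \<in> carrier_mat N N" and sym: "\<forall>a<N. \<forall>b<N. A$$(a,b) = A$$(b,a)"
    and x: "nsq N x > 0"
  shows "qf A N x x / nsq N x \<le> lambda_max A"
proof -
  obtain l where l: "eigenvalue A l" "qf A N x x \<le> l * nsq N x" using rayleigh_eig[OF A sym x] by blast
  have "char_poly A \<noteq> 0" using degree_monic_char_poly[OF A] by auto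
  then have fin: "finite {k. eigenvalue A k}"
    using poly_roots_finite[of "char_poly A"] eigenvalue_root_char_poly[OF A] by simp
  have "l \<le> lambda_max A" unfolding lambda_max_def using fin l(1) by (simp add: Max_ge)
  moreover have "qf A N x x / nsq N x \<le> l" using l(2) x by (simp add: divide_le_eq)
  ultimately show ?thesis by simp
qed



lemma some_deriv: "(f has_real_derivative d) (at x) \<Longrightarrow> (SOME d. (f has_real_derivative d) (at x)) = d"
  by (rule some_equality) (auto intro: DERIV_unique)

locale fluxp =
  fixes F F1 :: "real \<Rightarrow> real \<Rightarrow> real"
  assumes Fd: "\<And>u v. u > 0 \<Longrightarrow> v > 0 \<Longrightarrow> ((\<lambda>t. F t v) has_real_derivative F1 u v) (at u)"
    and Fs: "\<And>u v. F u v = F v u"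
begin

lemma jac_off:
  assumes a: "a < N" and b: "b < N" and ab: "a \<noteq> b" and u: "\<forall>k<N. u k > 0"
  shows "jac F N D u a b = -2 * D$$(a,b) * F1 (u b) (u a)"
proof -
  have eq: "residual F N D (u(b:=t)) a = -2 * (\<Sum>c<N. D$$(a,c) * F (u a) (if c = b then t else u c))" for t
    unfolding residual_def using ab by (auto intro!: sum.cong)
  have "((\<lambda>t. -2 * (\<Sum>c<N. D$$(a,c) * F (u a) (if c = b then t else u c))) has_real_derivative
        -2 * (\<Sum>c<N. if c = b then D$$(a,b) * F1 (u b) (u a) else 0)) (at (u b))"
  proof (intro DERIV_cmult DERIV_sum)
    fix c assume "c \<in> {..<N}"
    show "((\<lambda>t. D$$(a,c) * F (u a) (if c = b then t else u c)) has_real_derivative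
        (if c = b then D$$(a,b) * F1 (u b) (u a) else 0)) (at (u b))"
    proof (cases "c = b")
      case True
      have "((\<lambda>t. D$$(a,b) * F t (u a)) has_real_derivative D$$(a,b) * F1 (u b) (u a)) (at (u b))"
        using Fd[of "u b" "u a"] u a b by (intro DERIV_cmult) auto
      then show ?thesis using True by (simp add: Fs[of "u a"])
    qed simp
  qed
  then have "((\<lambda>t. residual F N D (u(b:=t)) a) has_real_derivative -2 * D$$(a,b) * F1 (u b) (u a)) (at (u b))"
    unfolding eq using b by (simp add: mult.assoc)
  then show ?thesis unfolding jac_def by (rule some_deriv)
qed

lemma jac_diag:
  assumes a: "a < N" and u: "\<forall>k<N. u k > 0" and Daa: "D$$(a,a) = 0"
  shows "jac F N D u a a = -2 * (\<Sum>c<N. D$$(a,c) * F1 (u a) (u c))"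
proof -
  have eq: "residual F N D (u(a:=t)) a = -2 * (\<Sum>c<N. D$$(a,c) * F t (if c = a then t else u c))" for t
    unfolding residual_def by (auto intro!: sum.cong)
  have "((\<lambda>t. -2 * (\<Sum>c<N. D$$(a,c) * F t (if c = a then t else u c))) has_real_derivative
        -2 * (\<Sum>c<N. D$$(a,c) * F1 (u a) (u c))) (at (u a))"
  proof (rule DERIV_cmult, rule DERIV_sum)
    fix c assume c: "c \<in> {..<N}"
    show "((\<lambda>t. D$$(a,c) * F t (if c = a then t else u c)) has_real_derivative
        D$$(a,c) * F1 (u a) (u c)) (at (u a))"
    proof (cases "c = a")
      case False
      then show ?thesis using Fd[of "u a" "u c"] u a c by (intro DERIV_cmult) auto
    qed (simp add: Daa)
  qed
  then show ?thesis unfolding jac_def eq by (rule some_deriv)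
qed

end



definition F1log :: "real \<Rightarrow> real \<Rightarrow> real" where
  "F1log u v = (if u = v then 1/2 else ((v-u)/u - (ln v - ln u))/(ln v - ln u)^2)"
definition F1geo :: "real \<Rightarrow> real \<Rightarrow> real" where
  "F1geo u v = sqrt (v/u) / 2"

lemma log_flux_sym: "log_flux u v = log_flux v u"
proof -
  have "(v - u) / (ln v - ln u) = (u - v) / (ln u - ln v)"
    by (metis minus_diff_eq minus_divide_divide)
  then show ?thesis unfolding log_flux_def by auto
qed

lemma geo_flux_sym: "geo_flux u v = geo_flux v u"
  unfolding geo_flux_def by (simp add: mult.commute)

lemma psi_deriv: "((\<lambda>s. log_flux s 1) has_real_derivative 1/2) (at 1)"
proof -
  have lim: "((\<lambda>y::real. ((y-1)/ln y - 1)/(y-1)) \<longlongrightarrow> 1/2) (at 1)"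
    by real_asymp
  have ev: "\<forall>\<^sub>F y in at (1::real). ((y-1)/ln y - 1)/(y-1) = (log_flux y 1 - log_flux 1 1)/(y - 1)"
  proof -
    have "\<forall>\<^sub>F y in at (1::real). y \<noteq> 1" by (simp add: eventually_at_filter)
    then show ?thesis
    proof (rule eventually_mono)
      fix y :: real assume "y \<noteq> 1"
      then show "((y-1)/ln y - 1)/(y-1) = (log_flux y 1 - log_flux 1 1)/(y - 1)"
      proof -
        have "(1 - y) / (ln 1 - ln y) = (y - 1) / ln y"
          by (metis ln_one minus_diff_eq minus_divide_divide diff_0)
        then show ?thesis using \<open>y \<noteq> 1\<close> unfolding log_flux_def by simp
      qed
    qed
  qed
  show ?thesis unfolding has_field_derivative_iff
    using tendsto_cong[OF ev] lim by simp
qed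

lemma log_flux_scale: assumes "t > 0" "u > 0" shows "log_flux t u = u * log_flux (t/u) 1"
proof (cases "t = u")
  case True then show ?thesis using assms unfolding log_flux_def by simp
next
  case False
  then have "t/u \<noteq> 1" using assms by simp
  then show ?thesis using False assms unfolding log_flux_def
    by (simp add: ln_div field_simps)
qed

lemma log_Fd: assumes u: "u > 0" and v: "v > 0"
  shows "((\<lambda>t. log_flux t v) has_real_derivative F1log u v) (at u)"
proof (cases "u = v")
  case True
  have uv1: "u/v = 1" unfolding True using v by simp
  have p: "((\<lambda>s. log_flux s 1) has_real_derivative 1/2) (at (u/v))" unfolding uv1 by (rule psi_deriv)
  have q: "((\<lambda>t. t/v) has_real_derivative 1/v) (at u)" using v by (auto intro!: derivative_eq_intros)
  have d: "((\<lambda>t. v * log_flux (t/v) 1) has_real_derivative v * (1/2 * (1/v))) (at u)"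
    by (intro DERIV_cmult DERIV_chain2[OF p q])
  have d2: "((\<lambda>t. v * log_flux (t/v) 1) has_real_derivative 1/2) (at u)"
    using d v by simp
  have f: "F1log u v = 1/2" using True by (simp add: F1log_def)
  show ?thesis unfolding f
  proof (rule has_field_derivative_transform_within_open[OF d2, where S = "{0<..}"])
    fix x :: real assume "x \<in> {0<..}"
    then show "v * log_flux (x/v) 1 = log_flux x v" using log_flux_scale[of x v] v by simp
  qed (use u in auto)
next
  case False
  have L: "ln v - ln u \<noteq> 0" using False u v by simp
  have d: "((\<lambda>t. (v - t)/(ln v - ln t)) has_real_derivative
          ((-1)*(ln v - ln u) - (v-u)*(-(1/u)))/((ln v - ln u)*(ln v - ln u))) (at u)"
    using u L by (auto intro!: derivative_eq_intros)
  have "((-1)*(ln v - ln u) - (v-u)*(-(1/u)))/((ln v - ln u)*(ln v - ln u)) = F1log u v"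
    unfolding F1log_def using False by (simp add: power2_eq_square algebra_simps)
  then have d2: "((\<lambda>t. (v - t)/(ln v - ln t)) has_real_derivative F1log u v) (at u)" using d by simp
  show ?thesis
    by (rule has_field_derivative_transform_within_open[OF d2, where S = "{0<..} \<inter> - {v}"])
       (use u False in \<open>auto simp: log_flux_def intro!: open_Int\<close>)
qed

lemma phi_bounds: fixes r :: real assumes r: "r > 0" "r \<noteq> 1"
  shows "0 \<le> (r - 1 - ln r)/(ln r)^2" "(r - 1 - ln r)/(ln r)^2 \<le> max 1 r"
proof -
  define x where "x = ln r"
  have x0: "x \<noteq> 0" using r ln_eq_zero_iff[of r] unfolding x_def by simp
  have x2: "x^2 > 0" using x0 by simp
  have rx: "r = exp x" using r unfolding x_def by simp
  have key: "r * (1 - x) \<le> 1"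
  proof -
    have "1 + (-x) \<le> exp (-x)" by (rule exp_ge_add_one_self)
    then have "r * (1 - x) \<le> r * exp (-x)" using r by simp
    also have "r * exp (-x) = 1" unfolding rx by (simp add: exp_minus)
    finally show ?thesis .
  qed
  show "0 \<le> (r - 1 - ln r)/(ln r)^2" using ln_le_minus_one[OF r(1)] by simp
  have "r - 1 - x \<le> max 1 r * x^2"
  proof (cases "x > 0")
    case True
    then have r1: "r > 1" using rx by simp
    show ?thesis
    proof (cases "x \<ge> 1")
      case True
      then have "x^2 \<ge> 1" by (simp add: one_le_power)
      then have "r \<le> r * x^2" using r by simp
      then have "r - 1 - x \<le> r * x^2" using True by linarith
      then show ?thesis using r1 by simp
    next
      case False
      have "r * (1 - x) * (1 + x) \<le> 1 * (1 + x)"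
        using key \<open>x > 0\<close> by (intro mult_right_mono) auto
      then have "r - 1 - x \<le> r * x^2" by (simp add: power2_eq_square algebra_simps)
      then show ?thesis using r1 by simp
    qed
  next
    case False
    then have xn: "x < 0" using x0 by simp
    then have r1: "r < 1" using rx by simp
    have e: "(1 + x + x^2) * (1 - x) = 1 - x^3" by (simp add: power2_eq_square power3_eq_cube algebra_simps)
    moreover have "x^3 < 0"
    proof -
      have "x * x > 0" using xn by (simp add: mult_neg_neg)
      from mult_pos_neg[OF this xn] show ?thesis by (simp add: power3_eq_cube)
    qed
    ultimately have rr: "r * (1 - x) \<le> (1 + x + x^2) * (1 - x)" using key e by linarith
    have "r \<le> 1 + x + x^2" using mult_right_le_imp_le[OF rr] xn by simp
    then show ?thesis using r1 by simp
  qed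
  then show "(r - 1 - ln r)/(ln r)^2 \<le> max 1 r"
    unfolding x_def[symmetric] using x2 by (simp add: divide_le_eq)
qed

lemma log_F1_bounds: assumes u: "u > 0" and v: "v > 0"
  shows "0 \<le> F1log u v" "F1log u v \<le> max 1 (v/u)"
proof -
  have "0 \<le> F1log u v \<and> F1log u v \<le> max 1 (v/u)"
  proof (cases "u = v")
    case True then show ?thesis unfolding F1log_def by simp
  next
    case False
    have r: "v/u > 0" "v/u \<noteq> 1" using u v False by auto
    have "F1log u v = (v/u - 1 - ln (v/u))/(ln (v/u))^2"
      unfolding F1log_def using u v False by (simp add: ln_div diff_divide_distrib)
    then show ?thesis using phi_bounds[OF r] by simp
  qed
  then show "0 \<le> F1log u v" "F1log u v \<le> max 1 (v/u)" by auto
qed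

lemma geo_Fd: assumes u: "u > 0" and v: "v > 0"
  shows "((\<lambda>t. geo_flux t v) has_real_derivative F1geo u v) (at u)"
proof -
  have d: "((\<lambda>t. sqrt (t * v)) has_real_derivative (inverse (sqrt (u * v)) / 2) * v) (at u)"
  proof -
    have uv: "u * v > 0" using u v by simp
    have "((\<lambda>t. t * v) has_real_derivative v) (at u)" by (auto intro!: derivative_eq_intros)
    from DERIV_chain2[OF DERIV_real_sqrt[OF uv] this] show ?thesis by simp
  qed
  have "(inverse (sqrt (u * v)) / 2) * v = F1geo u v"
  proof -
    have "v = sqrt v * sqrt v" using v by simp
    then have "(inverse (sqrt (u * v)) / 2) * v = sqrt v / sqrt u / 2"
      using u v by (simp add: real_sqrt_mult field_simps)
    then show ?thesis unfolding F1geo_def by (simp add: real_sqrt_divide)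
  qed
  then show ?thesis using d unfolding geo_flux_def by simp
qed

lemma geo_F1_bounds: assumes u: "u > 0" and v: "v > 0"
  shows "0 \<le> F1geo u v" "F1geo u v \<le> max 1 (v/u)"
proof -
  show "0 \<le> F1geo u v" unfolding F1geo_def using u v by simp
  have "sqrt (v/u) \<le> max 1 (v/u)"
  proof (cases "v/u \<le> 1")
    case True then show ?thesis by simp
  next
    case False
    then have "1 \<le> v/u" by simp
    then have "v/u \<le> (v/u)*(v/u)" using mult_left_mono[of 1 "v/u" "v/u"] by simp
    then have "v/u \<le> (v/u)^2" unfolding power2_eq_square .
    then have "sqrt (v/u) \<le> sqrt ((v/u)^2)" by (rule real_sqrt_le_mono)
    then show ?thesis using False by simp
  qed
  moreover have "sqrt (v/u) \<ge> 0" using u v by simp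
  ultimately show "F1geo u v \<le> max 1 (v/u)" unfolding F1geo_def by linarith
qed




lemma sum_two:
  fixes N :: nat
  assumes "i < N" "j < N" "i \<noteq> j"
  shows "(\<Sum>k<N. f k * (if k = i then s else if k = j then 1 else 0)) = s * f i + (f j :: real)"
proof -
  have "(\<Sum>k<N. f k * (if k = i then s else if k = j then 1 else 0))
      = (\<Sum>k<N. s * (if k = i then f k else 0) + (if k = j then f k else 0))"
    using assms by (intro sum.cong) auto
  also have "\<dots> = s * (\<Sum>k<N. if k = i then f k else 0) + (\<Sum>k<N. if k = j then f k else 0)"
    by (simp only: sum.distrib sum_distrib_left)
  also have "\<dots> = s * f i + f j" 
  proof -
    have "(\<Sum>k<N. if k = i then f k else 0) = f i" using assms(1) by (subst sum.delta) auto
    moreover have "(\<Sum>k<N. if k = j then f k else 0) = f j" using assms(2) by (subst sum.delta) auto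
    ultimately show ?thesis by simp
  qed
  finally show ?thesis .
qed

lemma qf_two:
  assumes "i < N" "j < N" "i \<noteq> j"
  shows "qf A N (\<lambda>k. if k = i then s else if k = j then 1 else 0) (\<lambda>k. if k = i then s else if k = j then 1 else 0)
     = s^2 * A$$(i,i) + s * A$$(i,j) + s * A$$(j,i) + A$$(j,j)"
proof -
  let ?x = "\<lambda>k. if k = i then s else if k = j then 1 else (0::real)"
  have "qf A N ?x ?x = (\<Sum>a<N. (\<Sum>b<N. A$$(a,b) * ?x b) * ?x a)"
    unfolding qf_def by (rule sum.cong[OF refl]) (simp add: sum_distrib_left sum_distrib_right mult_ac)
  also have "\<dots> = (\<Sum>a<N. (s * A$$(a,i) + A$$(a,j)) * ?x a)"
    using sum_two[OF assms] by simp
  also have "\<dots> = s * (s * A$$(i,i) + A$$(i,j)) + (s * A$$(j,i) + A$$(j,j))"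
    by (rule sum_two[OF assms])
  finally show ?thesis by (simp add: power2_eq_square algebra_simps)
qed

lemma nsq_two:
  assumes "i < N" "j < N" "i \<noteq> j"
  shows "nsq N (\<lambda>k. if k = i then s else if k = j then 1 else 0) = s^2 + 1"
proof -
  have "nsq N (\<lambda>k. if k = i then s else if k = j then 1 else 0) = (\<Sum>k<N. (if k = i then s else if k = j then 1 else 0) * (if k = i then s else if k = j then 1 else 0))"
    unfolding nsq_def power2_eq_square by simp
  also have "\<dots> = s * s + 1" using sum_two[OF assms, of "\<lambda>k. if k = i then s else if k = j then 1 else 0" s] assms by simp
  finally show ?thesis by (simp add: power2_eq_square)
qed


lemma (in fluxp) main_generic:
  fixes N :: nat and D :: "real mat" and U :: "nat \<Rightarrow> real" and i j :: nat and w :: "real \<Rightarrow> real"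
  assumes D_dim: "D \<in> carrier_mat N N"
    and D_skew: "\<forall>a<N. \<forall>b<N. D $$ (a, b) = - D $$ (b, a)"
    and U_nonneg: "\<forall>k<N. U k \<ge> 0"
    and ij: "i < N" "j < N" "i \<noteq> j"
    and Ui: "U i = 0" and Uj: "U j > 0" and Dij: "D $$ (i, j) \<noteq> 0"
    and F1nn: "\<And>u v. u > 0 \<Longrightarrow> v > 0 \<Longrightarrow> 0 \<le> F1 u v"
    and F1bd: "\<And>u v. u > 0 \<Longrightarrow> v > 0 \<Longrightarrow> F1 u v \<le> max 1 (v/u)"
    and w1: "\<And>e. 0 < e \<Longrightarrow> e \<le> 1 \<Longrightarrow> 1 \<le> w e"
    and Hw: "\<And>e V. 0 < e \<Longrightarrow> e \<le> 1 \<Longrightarrow> 0 \<le> V \<Longrightarrow> F1 e (V + e) \<le> (V + 1) * w e"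
    and Hlim: "filterlim (\<lambda>e. (F1 e (U j + e) - F1 (U j + e) e)^2 / w e) at_top (at_right 0)"
  shows "filterlim (\<lambda>e. lambda_max (jac_sym F N D (\<lambda>k. U k + e))) at_top (at_right 0)"
proof -
  define S where "S = (\<Sum>c<N. \<bar>D$$(i,c)\<bar> * (U c + 1))"
  define Ca where "Ca = 1 + 2 * S"
  define Cb where "Cb = 2 * (\<Sum>c<N. \<bar>D$$(j,c)\<bar> * max 1 ((U c + 1) / U j))"
  define K where "K = 2 * \<bar>D$$(i,j)\<bar> * (U j + 1)"
  define g where "g = (\<lambda>e. (F1 e (U j + e) - F1 (U j + e) e)^2 / w e)"
  have S0: "S \<ge> 0" unfolding S_def using U_nonneg by (intro sum_nonneg) auto
  have Ca1: "Ca \<ge> 1" unfolding Ca_def using S0 by simp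
  have K0: "K \<ge> 0" unfolding K_def using Uj by simp
  have Dself: "D$$(a,a) = 0" if "a < N" for a
  proof -
    have "D$$(a,a) = - D$$(a,a)" using D_skew that by blast
    then show ?thesis by linarith
  qed
  have Dji: "D$$(j,i) = - D$$(i,j)" using D_skew ij(1,2) by blast
  have bound: "qf (jac_sym F N D (\<lambda>k. U k + e)) N x x / nsq N x \<le> lambda_max (jac_sym F N D (\<lambda>k. U k + e))"
    if "nsq N x > 0" for e x
  proof -
    have "jac_sym F N D (\<lambda>k. U k + e) \<in> carrier_mat N N" unfolding jac_sym_def by simp
    moreover have "\<forall>a<N. \<forall>b<N. jac_sym F N D (\<lambda>k. U k + e) $$ (a,b) = jac_sym F N D (\<lambda>k. U k + e) $$ (b,a)"
      unfolding jac_sym_def by (simp add: add.commute)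
    ultimately show ?thesis by (rule lambda_max_ge[OF _ _ that])
  qed
  have key: "(c^2/(Ca * w e) - Cb) / (1 + K^2) \<le> lambda_max (jac_sym F N D (\<lambda>k. U k + e))"
    if e: "0 < e" "e \<le> 1" and m0: "c^2/(Ca * w e) - Cb \<ge> 0"
      and cdef: "c = D$$(i,j) * (F1 e (U j + e) - F1 (U j + e) e)" for e c
  proof -
    define u where "u = (\<lambda>k. U k + e)"
    define A where "A = jac_sym F N D u"
    define al where "al = Ca * w e"
    have upos: "\<forall>k<N. u k > 0" unfolding u_def using U_nonneg e by (auto intro: add_nonneg_pos)
    have ui: "u i = e" unfolding u_def Ui by simp
    have uj: "u j = U j + e" unfolding u_def by simp
    have we: "w e \<ge> 1" using w1 e by simp
    have alp: "al > 0" unfolding al_def using Ca1 we by simp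
    have Aent: "A $$ (a,b) = (jac F N D u a b + jac F N D u b a) / 2" if "a < N" "b < N" for a b
      unfolding A_def jac_sym_def using that by simp
    have aval: "A $$ (i,i) = -2 * (\<Sum>c<N. D$$(i,c) * F1 e (U c + e))"
      using Aent[OF ij(1) ij(1)] jac_diag[OF ij(1) upos Dself[OF ij(1)]] ui unfolding u_def by simp
    have "(\<Sum>c<N. D$$(i,c) * F1 e (U c + e)) \<le> (\<Sum>c<N. \<bar>D$$(i,c)\<bar> * (U c + 1)) * w e"
      unfolding sum_distrib_right
    proof (rule sum_mono)
      fix c assume c: "c \<in> {..<N}"
      have Uc: "U c \<ge> 0" using U_nonneg c by simp
      have nn: "0 \<le> F1 e (U c + e)" using F1nn[of e "U c + e"] e Uc by simp
      have "D$$(i,c) * F1 e (U c + e) \<le> \<bar>D$$(i,c)\<bar> * F1 e (U c + e)"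
        using nn by (simp add: mult_right_mono)
      also have "\<dots> \<le> \<bar>D$$(i,c)\<bar> * ((U c + 1) * w e)"
        using Hw[OF e Uc] by (simp add: mult_left_mono)
      finally show "D$$(i,c) * F1 e (U c + e) \<le> \<bar>D$$(i,c)\<bar> * (U c + 1) * w e" by (simp add: mult.assoc)
    qed
    then have a_lb: "A $$ (i,i) \<ge> - al"
      unfolding aval al_def Ca_def S_def[symmetric] using we S0 by (simp add: algebra_simps)
    have bval: "A $$ (j,j) = -2 * (\<Sum>c<N. D$$(j,c) * F1 (U j + e) (U c + e))"
      using Aent[OF ij(2) ij(2)] jac_diag[OF ij(2) upos Dself[OF ij(2)]] unfolding u_def by simp
    have "(\<Sum>c<N. D$$(j,c) * F1 (U j + e) (U c + e)) \<le> (\<Sum>c<N. \<bar>D$$(j,c)\<bar> * max 1 ((U c + 1) / U j))"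
    proof (rule sum_mono)
      fix c assume c: "c \<in> {..<N}"
      have Uc: "U c \<ge> 0" using U_nonneg c by simp
      have p1: "U j + e > 0" "U c + e > 0" using Uj Uc e by auto
      have nn: "0 \<le> F1 (U j + e) (U c + e)" using F1nn[OF p1] .
      have "(U c + e) / (U j + e) \<le> (U c + 1) / U j"
        using Uc Uj e by (intro frac_le) auto
      then have "F1 (U j + e) (U c + e) \<le> max 1 ((U c + 1) / U j)"
        using F1bd[OF p1] by (meson max.mono order.refl order_trans)
      then have "\<bar>D$$(j,c)\<bar> * F1 (U j + e) (U c + e) \<le> \<bar>D$$(j,c)\<bar> * max 1 ((U c + 1) / U j)"
        by (simp add: mult_left_mono)
      moreover have "D$$(j,c) * F1 (U j + e) (U c + e) \<le> \<bar>D$$(j,c)\<bar> * F1 (U j + e) (U c + e)"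
        using nn by (simp add: mult_right_mono)
      ultimately show "D$$(j,c) * F1 (U j + e) (U c + e) \<le> \<bar>D$$(j,c)\<bar> * max 1 ((U c + 1) / U j)"
        by linarith
    qed
    then have b_lb: "A $$ (j,j) \<ge> - Cb" unfolding bval Cb_def by simp
    have cval: "A $$ (i,j) = c" "A $$ (j,i) = c"
    proof -
      have "A $$ (i,j) = (-2 * D$$(i,j) * F1 (U j + e) e + -2 * D$$(j,i) * F1 e (U j + e)) / 2"
        using Aent[OF ij(1) ij(2)] jac_off[OF ij(1) ij(2) ij(3) upos] jac_off[OF ij(2) ij(1) ij(3)[symmetric] upos]
          ui uj by simp
      then show "A $$ (i,j) = c" unfolding cdef Dji by (simp add: algebra_simps)
      have "A $$ (j,i) = (-2 * D$$(j,i) * F1 e (U j + e) + -2 * D$$(i,j) * F1 (U j + e) e) / 2"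
        using Aent[OF ij(2) ij(1)] jac_off[OF ij(1) ij(2) ij(3) upos] jac_off[OF ij(2) ij(1) ij(3)[symmetric] upos]
          ui uj by simp
      then show "A $$ (j,i) = c" unfolding cdef Dji by (simp add: algebra_simps)
    qed
    have c_ub: "\<bar>c\<bar> \<le> K * al"
    proof -
      have p1: "U j + e > 0" using Uj e by auto
      have n1: "0 \<le> F1 e (U j + e)" using F1nn[OF e(1) p1] .
      have n2: "0 \<le> F1 (U j + e) e" using F1nn[OF p1 e(1)] .
      have b1: "F1 e (U j + e) \<le> (U j + 1) * w e" using Hw[OF e] Uj by simp
      have "e / (U j + e) \<le> 1" using p1 Uj by simp
      then have "F1 (U j + e) e \<le> 1" using F1bd[OF p1 e(1)] by simp
      also have "1 \<le> (U j + 1) * w e" using we Uj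
        by (metis add_le_cancel_right le_add_same_cancel2 less_eq_real_def mult_mono' mult_1 zero_le_one)
      finally have b2: "F1 (U j + e) e \<le> (U j + 1) * w e" .
      have "\<bar>F1 e (U j + e) - F1 (U j + e) e\<bar> \<le> 2 * ((U j + 1) * w e)"
        using n1 n2 b1 b2 by linarith
      then have "\<bar>c\<bar> \<le> \<bar>D$$(i,j)\<bar> * (2 * ((U j + 1) * w e))"
        unfolding cdef abs_mult by (simp add: mult_left_mono)
      also have "\<dots> = K * w e" unfolding K_def by simp
      also have "\<dots> \<le> K * al" unfolding al_def using K0 we Ca1
        by (intro mult_left_mono) (auto simp: mult_le_cancel_right1)
      finally show ?thesis .
    qed
    define s where "s = c / al"
    define x where "x = (\<lambda>k. if k = i then s else if k = j then 1 else (0::real))"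
    have nx: "nsq N x = s^2 + 1" unfolding x_def by (rule nsq_two[OF ij])
    have qx: "qf A N x x = s^2 * A$$(i,i) + s * A$$(i,j) + s * A$$(j,i) + A$$(j,j)"
      unfolding x_def by (rule qf_two[OF ij])
    have "s^2 * A$$(i,i) \<ge> s^2 * (- al)" using mult_left_mono[OF a_lb, of "s^2"] by simp
    moreover have "s^2 * al = c^2 / al" unfolding s_def using alp by (simp add: power2_eq_square)
    moreover have "s * c = c^2 / al" unfolding s_def by (simp add: power2_eq_square)
    ultimately have q_lb: "qf A N x x \<ge> c^2 / al - Cb" unfolding qx cval using b_lb by linarith
    have "\<bar>s\<bar> \<le> K" unfolding s_def using c_ub alp by (simp add: abs_div pos_divide_le_eq)
    then have "s^2 \<le> K^2" by (metis abs_le_square_iff abs_of_nonneg K0 power2_abs)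
    then have nx_ub: "nsq N x \<le> 1 + K^2" unfolding nx by simp
    have nx_pos: "nsq N x > 0" unfolding nx by (simp add: add_nonneg_pos)
    have m0': "c^2/al - Cb \<ge> 0" using m0 unfolding al_def .
    have "(c^2/al - Cb) / (1 + K^2) \<le> (c^2/al - Cb) / nsq N x"
      using m0' nx_pos nx_ub by (intro divide_left_mono) auto
    also have "\<dots> \<le> qf A N x x / nsq N x" using q_lb nx_pos by (simp add: divide_right_mono)
    also have "\<dots> \<le> lambda_max A" unfolding A_def u_def using bound[OF nx_pos] .
    finally show ?thesis unfolding al_def A_def u_def .
  qed
  have Dpos: "D$$(i,j)^2 / Ca > 0" using Dij Ca1 by simp
  have lim2: "filterlim (\<lambda>e. D$$(i,j)^2 / Ca * g e) at_top (at_right 0)"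
    using Hlim unfolding g_def[symmetric]
    by (rule filterlim_tendsto_pos_mult_at_top[OF tendsto_const Dpos])
  have ev01: "eventually (\<lambda>e. 0 < e \<and> e \<le> (1::real)) (at_right 0)"
    using eventually_at_right_real[of 0 1] by (simp add: eventually_mono)
  show ?thesis unfolding filterlim_at_top
  proof
    fix Z :: real
    define Z' where "Z' = max 0 Z * (1 + K^2) + Cb"
    have ev: "eventually (\<lambda>e. Z' \<le> D$$(i,j)^2 / Ca * g e) (at_right 0)"
      using lim2 unfolding filterlim_at_top by blast
    show "eventually (\<lambda>e. Z \<le> lambda_max (jac_sym F N D (\<lambda>k. U k + e))) (at_right 0)"
      using ev ev01
    proof eventually_elim
      case (elim e)
      then have e: "0 < e" "e \<le> 1" by auto
      define c where "c = D$$(i,j) * (F1 e (U j + e) - F1 (U j + e) e)"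
      have we: "w e \<ge> 1" using w1 e by simp
      have cg: "c^2 / (Ca * w e) = D$$(i,j)^2 / Ca * g e"
        unfolding c_def g_def by (simp add: power_mult_distrib)
      have K1: "1 + K^2 > 0" by (simp add: add_pos_nonneg)
      have "c^2 / (Ca * w e) - Cb \<ge> max 0 Z * (1 + K^2)" using elim(1) unfolding cg Z'_def by simp
      moreover have "max 0 Z * (1 + K^2) \<ge> 0" using K1 by simp
      ultimately have m0: "c^2 / (Ca * w e) - Cb \<ge> 0" by linarith
      have "max 0 Z \<le> (c^2 / (Ca * w e) - Cb) / (1 + K^2)"
        using \<open>c^2 / (Ca * w e) - Cb \<ge> max 0 Z * (1 + K^2)\<close> K1 by (simp only: pos_le_divide_eq[OF K1])
      also have "\<dots> \<le> lambda_max (jac_sym F N D (\<lambda>k. U k + e))"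
        by (rule key[OF e m0 c_def])
      finally show ?case by simp
    qed
  qed
qed




lemma comp_right: fixes c :: real assumes c: "c > 0" and G: "filterlim G at_top (at_right 0)"
  shows "filterlim (\<lambda>e. G (e/c)) at_top (at_right 0)"
proof -
  have "filterlim (\<lambda>e. e/c) (at_right 0) (at_right 0)"
    unfolding filterlim_at
  proof
    show "\<forall>\<^sub>F x in at_right 0. x / c \<in> {0<..} \<and> x / c \<noteq> 0"
      using eventually_at_right_less[of "0::real"] by (rule eventually_mono) (use c in auto)
    have "((\<lambda>e. e/c) \<longlongrightarrow> 0/c) (at_right 0)" by (intro tendsto_intros) (use c in auto)
    then show "((\<lambda>e. e/c) \<longlongrightarrow> 0) (at_right 0)" by simp
  qed
  from filterlim_compose[OF G this] show ?thesis by (simp add: o_def)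
qed

definition Plog :: "real \<Rightarrow> real" where
  "Plog d = ((1+d-d)/d - (ln(1+d) - ln d))/(ln(1+d) - ln d)^2 - ((d-(1+d))/(1+d) - (ln d - ln(1+d)))/(ln d - ln(1+d))^2"
definition Pgeo :: "real \<Rightarrow> real" where
  "Pgeo d = sqrt((1+d)/d)/2 - sqrt(d/(1+d))/2"

lemma Plog_lim: "filterlim (\<lambda>d. (Plog d)^2 * d) at_top (at_right 0)"
  unfolding Plog_def by real_asymp
lemma Pgeo_lim: "filterlim (\<lambda>d. (Pgeo d)^2 * sqrt d) at_top (at_right 0)"
  unfolding Pgeo_def by real_asymp

lemma F1log_hom: assumes "t > 0" "a > 0" "b > 0" shows "F1log (t*a) (t*b) = F1log a b"
  using assms unfolding F1log_def by (simp add: ln_mult right_diff_distrib[symmetric])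

lemma log_case:
  fixes N :: nat and D :: "real mat" and U :: "nat \<Rightarrow> real" and i j :: nat
  assumes D_dim: "D \<in> carrier_mat N N"
    and D_skew: "\<forall>a<N. \<forall>b<N. D $$ (a, b) = - D $$ (b, a)"
    and U_nonneg: "\<forall>k<N. U k \<ge> 0"
    and ij: "i < N" "j < N" "i \<noteq> j"
    and Ui: "U i = 0" and Uj: "U j > 0" and Dij: "D $$ (i, j) \<noteq> 0"
  shows "filterlim (\<lambda>\<epsilon>. lambda_max (jac_sym log_flux N D (\<lambda>k. U k + \<epsilon>))) at_top (at_right 0)"
proof -
  interpret fluxp log_flux F1log
    by unfold_locales (auto intro: log_Fd log_flux_sym)
  show ?thesis
  proof (rule main_generic[OF D_dim D_skew U_nonneg ij Ui Uj Dij, where w = "\<lambda>e. 1/e"])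
    show "\<And>u v. 0 < u \<Longrightarrow> 0 < v \<Longrightarrow> 0 \<le> F1log u v" using log_F1_bounds by blast
    show "\<And>u v. 0 < u \<Longrightarrow> 0 < v \<Longrightarrow> F1log u v \<le> max 1 (v/u)" using log_F1_bounds by blast
    show "1 \<le> 1/e" if "0 < e" "e \<le> 1" for e :: real
      using that by (subst le_divide_eq_1_pos) auto
    show "F1log e (V + e) \<le> (V + 1) * (1/e)" if e: "0 < e" "e \<le> 1" and V: "0 \<le> V" for e V
    proof -
      have "F1log e (V + e) \<le> max 1 ((V+e)/e)" using log_F1_bounds(2)[of e "V+e"] e V by simp
      also have "\<dots> \<le> (V + 1) / e"
      proof (rule max.boundedI)
        show "1 \<le> (V + 1) / e" using e V by (simp add: le_divide_eq)
        show "(V+e)/e \<le> (V + 1) / e" using e by (intro divide_right_mono) auto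
      qed
      finally show ?thesis by simp
    qed
    have G: "filterlim (\<lambda>e. U j * ((Plog (e / U j))^2 * (e / U j))) at_top (at_right 0)"
      by (rule filterlim_tendsto_pos_mult_at_top[OF tendsto_const Uj comp_right[OF Uj Plog_lim]])
    have ev: "\<forall>\<^sub>F e in at_right 0. U j * ((Plog (e / U j))^2 * (e / U j)) =
       (F1log e (U j + e) - F1log (U j + e) e)^2 / (1/e)"
      using eventually_at_right_less[of "0::real"]
    proof (rule eventually_mono)
      fix e :: real assume e: "0 < e"
      define d where "d = e / U j"
      have d: "d > 0" "e = U j * d" using e Uj unfolding d_def by auto
      have h1: "F1log e (U j + e) = F1log d (1 + d)"
        using F1log_hom[of "U j" d "1 + d"] d Uj by (simp add: algebra_simps)
      have h2: "F1log (U j + e) e = F1log (1 + d) d"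
        using F1log_hom[of "U j" "1 + d" d] d Uj by (simp add: algebra_simps)
      have "F1log d (1 + d) - F1log (1 + d) d = Plog d"
        unfolding F1log_def Plog_def by simp
      then show "U j * ((Plog (e / U j))^2 * (e / U j)) = (F1log e (U j + e) - F1log (U j + e) e)^2 / (1/e)"
        unfolding h1 h2 d_def[symmetric] using d by simp
    qed
    show "filterlim (\<lambda>e. (F1log e (U j + e) - F1log (U j + e) e)^2 / (1/e)) at_top (at_right 0)"
      using filterlim_cong[OF refl refl ev] G by simp
  qed
qed

lemma geo_case:
  fixes N :: nat and D :: "real mat" and U :: "nat \<Rightarrow> real" and i j :: nat
  assumes D_dim: "D \<in> carrier_mat N N"
    and D_skew: "\<forall>a<N. \<forall>b<N. D $$ (a, b) = - D $$ (b, a)"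
    and U_nonneg: "\<forall>k<N. U k \<ge> 0"
    and ij: "i < N" "j < N" "i \<noteq> j"
    and Ui: "U i = 0" and Uj: "U j > 0" and Dij: "D $$ (i, j) \<noteq> 0"
  shows "filterlim (\<lambda>\<epsilon>. lambda_max (jac_sym geo_flux N D (\<lambda>k. U k + \<epsilon>))) at_top (at_right 0)"
proof -
  interpret fluxp geo_flux F1geo
    by unfold_locales (auto intro: geo_Fd geo_flux_sym)
  show ?thesis
  proof (rule main_generic[OF D_dim D_skew U_nonneg ij Ui Uj Dij, where w = "\<lambda>e. 1 / sqrt e"])
    show "\<And>u v. 0 < u \<Longrightarrow> 0 < v \<Longrightarrow> 0 \<le> F1geo u v" using geo_F1_bounds by blast
    show "\<And>u v. 0 < u \<Longrightarrow> 0 < v \<Longrightarrow> F1geo u v \<le> max 1 (v/u)" using geo_F1_bounds by blast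
    show "1 \<le> 1 / sqrt e" if "0 < e" "e \<le> 1" for e
      using that by (simp add: le_divide_eq real_sqrt_le_1_iff)
    show "F1geo e (V + e) \<le> (V + 1) * (1 / sqrt e)" if e: "0 < e" "e \<le> 1" and V: "0 \<le> V" for e V
    proof -
      have "sqrt (V + e) \<le> sqrt (V + 1)" using e by simp
      also have "\<dots> \<le> V + 1"
      proof -
        have "V + 1 \<le> (V + 1)^2" using V by (simp add: power2_eq_square)
        then have "sqrt (V + 1) \<le> sqrt ((V+1)^2)" by (rule real_sqrt_le_mono)
        then show ?thesis using V by simp
      qed
      finally have s1: "sqrt (V + e) \<le> V + 1" .
      have "F1geo e (V + e) = sqrt (V + e) / sqrt e / 2" unfolding F1geo_def by (simp add: real_sqrt_divide)
      also have "\<dots> \<le> sqrt (V + e) / sqrt e"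
      proof -
        have h: "\<And>x::real. 0 \<le> x \<Longrightarrow> x / 2 \<le> x" by simp
        have "0 \<le> sqrt (V + e) / sqrt e" using e V by simp
        then show ?thesis by (rule h)
      qed
      also have "\<dots> \<le> (V + 1) / sqrt e" using s1 e by (intro divide_right_mono) auto
      finally show ?thesis by simp
    qed
    have G: "filterlim (\<lambda>e. sqrt (U j) * ((Pgeo (e / U j))^2 * sqrt (e / U j))) at_top (at_right 0)"
      by (rule filterlim_tendsto_pos_mult_at_top[OF tendsto_const _ comp_right[OF Uj Pgeo_lim]]) (use Uj in simp)
    have ev: "\<forall>\<^sub>F e in at_right 0. sqrt (U j) * ((Pgeo (e / U j))^2 * sqrt (e / U j)) =
       (F1geo e (U j + e) - F1geo (U j + e) e)^2 / (1 / sqrt e)"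
      using eventually_at_right_less[of "0::real"]
    proof (rule eventually_mono)
      fix e :: real assume e: "0 < e"
      define d where "d = e / U j"
      have d: "d > 0" "e = U j * d" using e Uj unfolding d_def by auto
      have h1: "F1geo e (U j + e) = F1geo d (1 + d)"
        unfolding F1geo_def d(2) using Uj d(1) by (simp add: field_simps)
      have "U j + U j * d = U j * (1 + d)" by (simp add: algebra_simps)
      then have r: "U j * d / (U j + U j * d) = d / (1 + d)" using Uj by simp
      have h2: "F1geo (U j + e) e = F1geo (1 + d) d"
        unfolding F1geo_def d(2) r ..
      have "F1geo d (1 + d) - F1geo (1 + d) d = Pgeo d"
        unfolding F1geo_def Pgeo_def by simp
      moreover have "sqrt e = sqrt (U j) * sqrt d" unfolding d(2) by (simp add: real_sqrt_mult)
      ultimately show "sqrt (U j) * ((Pgeo (e / U j))^2 * sqrt (e / U j)) = (F1geo e (U j + e) - F1geo (U j + e) e)^2 / (1 / sqrt e)"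
        unfolding h1 h2 d_def[symmetric] by simp
    qed
    show "filterlim (\<lambda>e. (F1geo e (U j + e) - F1geo (U j + e) e)^2 / (1 / sqrt e)) at_top (at_right 0)"
      using filterlim_cong[OF refl refl ev] G by simp
  qed
qed

theorem mainTheorem11:
  fixes N :: nat and D :: "real mat" and U :: "nat \<Rightarrow> real"
    and F :: "real \<Rightarrow> real \<Rightarrow> real" and i j :: nat
  assumes D_dim: "D \<in> carrier_mat N N"
    and D_skew: "\<forall>a<N. \<forall>b<N. D $$ (a, b) = - D $$ (b, a)"
    and U_nonneg: "\<forall>k<N. U k \<ge> 0"
    and ij: "i < N" "j < N" "i \<noteq> j"
    and Ui: "U i = 0" and Uj: "U j > 0" and Dij: "D $$ (i, j) \<noteq> 0"
    and F_choice: "F = log_flux \<or> F = geo_flux"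
  shows "filterlim (\<lambda>\<epsilon>. lambda_max (jac_sym F N D (\<lambda>k. U k + \<epsilon>)))
           at_top (at_right 0)"
  using F_choice log_case[OF D_dim D_skew U_nonneg ij Ui Uj Dij] geo_case[OF D_dim D_skew U_nonneg ij Ui Uj Dij]
  by auto


end
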